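(* Let $\bm\Lambda=\mathrm{diag}(\lambda_1,\ldots,\lambda_d)$ with $\lambda_i\ge0$ and $\bm\Lambda\neq{\bm{0}}$, let $\eta>0$, $\beta\in[0,1)$, $\mu>0$, and consider ZO-GDM on $f_{\mathrm{quad}}({\bm{x}})=\tfrac12{\bm{x}}^\top\bm\Lambda{\bm{x}}$: \[ {\bm{m}}_{t+1}=\beta{\bm{m}}_t+\frac{f_{\mathrm{quad}}({\bm{x}}_t+\mu{\bm{u}}_t)-f_{\mathrm{quad}}({\bm{x}}_t-\mu{\bm{u}}_t)}{2\mu}{\bm{u}}_t,\qquad{\bm{x}}_{t+1}={\bm{x}}_t-\eta{\bm{m}}_{t+1}, \] with ${\bm{u}}_t\overset{\mathrm{i.i.d.}}{\sim}\mathcal N({\bm{0}},{\bm{I}}_d)$, ${\bm{u}}_t$ independent of $({\bm{x}}_t,{\bm{m}}_t)$. Writing ${\bm{x}}_t=(x_{1,t},\ldots,x_{d,t})$, ${\bm{m}}_t=(m_{1,t},\ldots,m_{d,t})$, define for each $t$ and $i$ \[ {\bm{W}}_{i,t}:=\begin{bmatrix}\mathbb{E}[x_{i,t}^2]&\mathbb{E}[\eta x_{i,t}m_{i,t}]\\ \mathbb{E}[\eta x_{i,t}m_{i,t}]&\mathbb{E}[\eta^2m_{i,t}^2]\end{bmatrix}. \] Then \[ {\bm{W}}_{i,t+1}={\bm{A}}_i{\bm{W}}_{i,t}{\bm{A}}_i^\top+\eta^2\Bigl(\lambda_i^2({\bm{W}}_{i,t})_{11}+\sum_{j=1}^d\lambda_j^2({\bm{W}}_{j,t})_{11}\Bigr){\bm{Q}},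 \] where ${\bm{A}}_i=\begin{bmatrix}1-\eta\lambda_i&-\beta\\ \eta\lambda_i&\beta\end{bmatrix}$ and ${\bm{Q}}=\begin{bmatrix}1&-1\\-1&1\end{bmatrix}$. *)

theory Defs
  imports "HOL-Probability.Probability"
begin

text \<open>The quadratic f_quad(x) = 1/2 x^T Lambda x with Lambda = diag(lam 0, ..., lam (d-1)).
  Vectors of R^d are represented as functions nat => real on the index set {..<d}.\<close>
definition fquad :: "nat \<Rightarrow> (nat \<Rightarrow> real) \<Rightarrow> (nat \<Rightarrow> real) \<Rightarrow> real" where
  "fquad d lam x = (1/2) * (\<Sum>i<d. lam i * (x i)^2)"

definition mat2 :: "real \<Rightarrow> real \<Rightarrow> real \<Rightarrow> real \<Rightarrow> real^2^2" where
  "mat2 a b c e = vector [vector [a, b], vector [c, e]]"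

text \<open>The second-moment matrix W_{i,t}; x t i and m t i are the i-th coordinates of x_t, m_t.\<close>
definition Wmat :: "'a measure \<Rightarrow> real \<Rightarrow> (nat \<Rightarrow> nat \<Rightarrow> 'a \<Rightarrow> real) \<Rightarrow> (nat \<Rightarrow> nat \<Rightarrow> 'a \<Rightarrow> real)
    \<Rightarrow> nat \<Rightarrow> nat \<Rightarrow> real^2^2" where
  "Wmat M \<eta> x m i t =
     mat2 (integral\<^sup>L M (\<lambda>\<omega>. (x t i \<omega>)^2))
          (integral\<^sup>L M (\<lambda>\<omega>. \<eta> * x t i \<omega> * m t i \<omega>))
          (integral\<^sup>L M (\<lambda>\<omega>. \<eta> * x t i \<omega> * m t i \<omega>))
          (integral\<^sup>L M (\<lambda>\<omega>. \<eta>^2 * (m t i \<omega>)^2))"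

definition Amat :: "real \<Rightarrow> real \<Rightarrow> real \<Rightarrow> real^2^2" where
  "Amat \<eta> \<beta> l = mat2 (1 - \<eta> * l) (- \<beta>) (\<eta> * l) \<beta>"

definition Qmat :: "real^2^2" where
  "Qmat = mat2 1 (-1) (-1) 1"

end

theory Submission
  imports Defs
begin

lemma fquad_diff:
  "fquad d lam (\<lambda>j. a j + \<mu> * b j) - fquad d lam (\<lambda>j. a j - \<mu> * b j)
     = 2 * \<mu> * (\<Sum>j<d. lam j * a j * b j)"
proof -
  have e: "lam j * (a j + \<mu> * b j)^2 - lam j * (a j - \<mu> * b j)^2 = 4 * \<mu> * (lam j * a j * b j)" for j
    by (simp add: power2_eq_square algebra_simps)
  have "fquad d lam (\<lambda>j. a j + \<mu> * b j) - fquad d lam (\<lambda>j. a j - \<mu> * b j)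
     = (1/2) * ((\<Sum>j<d. lam j * (a j + \<mu> * b j)^2) - (\<Sum>j<d. lam j * (a j - \<mu> * b j)^2))"
    unfolding fquad_def by (simp only: right_diff_distrib)
  also have "\<dots> = (1/2) * (\<Sum>j<d. lam j * (a j + \<mu> * b j)^2 - lam j * (a j - \<mu> * b j)^2)"
    by (simp only: sum_subtractf)
  also have "\<dots> = (1/2) * (\<Sum>j<d. 4 * \<mu> * (lam j * a j * b j))"
    by (simp only: e)
  also have "\<dots> = 2 * \<mu> * (\<Sum>j<d. lam j * a j * b j)"
    by (simp add: sum_distrib_left[symmetric])
  finally show ?thesis .
qed

lemma mat_lemma:
  fixes \<eta> \<beta> l a b c s :: real
  shows "mat2 ((1 - \<eta>*l)^2 * a - 2*(1-\<eta>*l)*\<beta>*b + \<beta>^2*c + s)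
              (\<eta>*l*(1-\<eta>*l)*a + (1 - 2*\<eta>*l)*\<beta>*b - \<beta>^2*c - s)
              (\<eta>*l*(1-\<eta>*l)*a + (1 - 2*\<eta>*l)*\<beta>*b - \<beta>^2*c - s)
              ((\<eta>*l)^2*a + 2*\<eta>*l*\<beta>*b + \<beta>^2*c + s)
    = Amat \<eta> \<beta> l ** mat2 a b b c ** transpose (Amat \<eta> \<beta> l) + s *\<^sub>R Qmat"
  unfolding Amat_def Qmat_def mat2_def
  by (simp add: vec_eq_iff forall_2 matrix_matrix_mult_def transpose_def sum_2 vector_def
      power2_eq_square algebra_simps)

lemma pd: "a < (d::nat) \<Longrightarrow> (\<Prod>l<d. (f l::real) ^ of_bool (l = a)) = f a"
proof -
  assume a: "a < d"
  have "(\<Prod>l<d. (f l::real) ^ of_bool (l = a)) = (\<Prod>l<d. if l = a then f l else 1)"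
    by (rule prod.cong) auto
  also have "\<dots> = f a" using a by (subst prod.delta) auto
  finally show ?thesis .
qed

lemma mon1:
  fixes z :: "nat \<Rightarrow> real"
  assumes "j < d" "i < d"
  shows "(\<Prod>l<d. z l ^ (of_bool (l=j) + of_bool (l=i))) = z j * z i"
  using assms by (simp add: power_add prod.distrib pd)

lemma mon2:
  fixes z :: "nat \<Rightarrow> real"
  assumes "j < d" "k < d" "i < d"
  shows "(\<Prod>l<d. z l ^ (of_bool (l=j) + of_bool (l=k) + 2 * of_bool (l=i))) = z j * z k * z i ^ 2"
proof -
  have "(\<Prod>l<d. z l ^ (of_bool (l=j) + of_bool (l=k) + 2 * of_bool (l=i)))
     = (\<Prod>l<d. z l ^ of_bool (l=j)) * (\<Prod>l<d. z l ^ of_bool (l=k)) * (\<Prod>l<d. (z l ^ 2) ^ of_bool (l=i))"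
    by (simp add: power_add prod.distrib power_mult)
  also have "\<dots> = z j * z k * z i ^ 2" using assms by (simp only: pd)
  finally show ?thesis .
qed

definition nm :: "nat \<Rightarrow> real" where
  "nm n = integral\<^sup>L lborel (\<lambda>x. std_normal_density x * x ^ n)"

lemma nm_vals: "nm 0 = 1" "nm 1 = 0" "nm 2 = 1" "nm 3 = 0" "nm 4 = 3"
proof -
  show "nm 0 = 1" using integral_std_normal_moment_even[of 0] by (simp add: nm_def)
  show "nm 1 = 0" using integral_std_normal_moment_odd[of 0] by (simp add: nm_def)
  show "nm 2 = 1" using integral_std_normal_moment_even[of 1] by (simp add: nm_def)
  show "nm 3 = 0" using integral_std_normal_moment_odd[of 1] by (simp add: nm_def numeral_3_eq_3)
  show "nm 4 = 3" using integral_std_normal_moment_even[of 2] by (simp add: nm_def fact_numeral)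
qed

lemma nm_Suc2: "nm (Suc (Suc 0)) = 1" using nm_vals(3) by (simp add: numeral_2_eq_2)
lemma nm_Suc0: "nm (Suc 0) = 0" using nm_vals(2) by simp

lemma nm1:
  assumes "j < (d::nat)" "i < d"
  shows "(\<Prod>l<d. nm (of_bool (l=j) + of_bool (l=i))) = (if j = i then 1 else 0)"
proof (cases "j = i")
  case True
  then have "\<And>l. nm (of_bool (l=j) + of_bool (l=i)) = 1" by (auto simp: nm_vals nm_Suc2)
  then show ?thesis using True by simp
next
  case False
  have "nm (of_bool (j=j) + of_bool (j=i)) = 0" using False by (simp add: nm_vals nm_Suc0 nm_Suc2)
  then have "\<exists>a\<in>{..<d}. nm (of_bool (a=j) + of_bool (a=i)) = 0" using assms by blast
  then show ?thesis using False by (simp add: prod_zero_iff)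
qed

lemma nm2:
  assumes "j < (d::nat)" "k < d" "i < d"
  shows "(\<Prod>l<d. nm (of_bool (l=j) + of_bool (l=k) + 2 * of_bool (l=i)))
     = (if j = k then (if j = i then 3 else 1) else 0)"
proof (cases "j = k")
  case True
  show ?thesis
  proof (cases "j = i")
    case True2: True
    have "\<And>l. nm (of_bool (l=j) + of_bool (l=k) + 2 * of_bool (l=i)) = (if l = i then 3 else 1)"
      using True True2 by (auto simp: nm_vals nm_Suc2)
    then have "(\<Prod>l<d. nm (of_bool (l=j) + of_bool (l=k) + 2 * of_bool (l=i)))
       = (\<Prod>l<d. if l = i then 3 else 1)" by (intro prod.cong) auto
    also have "\<dots> = 3" using assms by (subst prod.delta) auto
    finally show ?thesis using True True2 by simp
  next
    case False
    have "\<And>l. nm (of_bool (l=j) + of_bool (l=k) + 2 * of_bool (l=i)) = 1"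
      using True False by (auto simp: nm_vals nm_Suc2)
    then show ?thesis using True False by simp
  qed
next
  case False
  show ?thesis
  proof (cases "j = i")
    case True
    have "nm (of_bool (k=j) + of_bool (k=k) + 2 * of_bool (k=i)) = 0" using False True by (simp add: nm_vals nm_Suc0 nm_Suc2)
    then have "\<exists>a\<in>{..<d}. nm (of_bool (a=j) + of_bool (a=k) + 2 * of_bool (a=i)) = 0" using assms by blast
    then show ?thesis using False by (simp add: prod_zero_iff)
  next
    case F2: False
    have "nm (of_bool (j=j) + of_bool (j=k) + 2 * of_bool (j=i)) = 0" using False F2 by (simp add: nm_vals nm_Suc0 nm_Suc2)
    then have "\<exists>a\<in>{..<d}. nm (of_bool (a=j) + of_bool (a=k) + 2 * of_bool (a=i)) = 0" using assms by blast
    then show ?thesis using False by (simp add: prod_zero_iff)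
  qed
qed


lemma sq_sum: "(\<Sum>j<(d::nat). f j)^2 * (U::real) = (\<Sum>j<d. \<Sum>k<d. f j * f k * U)"
  unfolding power2_eq_square sum_product by (simp add: sum_distrib_right)

lemma abs_mult_le_sq: "\<bar>a * b\<bar> \<le> a^2 + (b::real)^2"
proof -
  have "0 \<le> (\<bar>a\<bar> - \<bar>b\<bar>)^2" by simp
  moreover have "(\<bar>a\<bar> - \<bar>b\<bar>)^2 = a^2 + b^2 - 2 * \<bar>a * b\<bar>"
    by (simp add: power2_eq_square abs_mult algebra_simps)
  ultimately show ?thesis by (smt (verit) abs_ge_zero)
qed

lemma sq_int:
  fixes f g :: "'a \<Rightarrow> real"
  assumes "f \<in> borel_measurable M" "g \<in> borel_measurable M"
    "integrable M (\<lambda>\<omega>. f \<omega>^2)" "integrable M (\<lambda>\<omega>. g \<omega>^2)"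
  shows "integrable M (\<lambda>\<omega>. f \<omega> * g \<omega>)"
proof (rule Bochner_Integration.integrable_bound[of M "\<lambda>\<omega>. f \<omega>^2 + g \<omega>^2"])
  show "integrable M (\<lambda>\<omega>. f \<omega>^2 + g \<omega>^2)" using assms by auto
  show "(\<lambda>\<omega>. f \<omega> * g \<omega>) \<in> borel_measurable M" using assms by auto
  show "AE \<omega> in M. norm (f \<omega> * g \<omega>) \<le> norm (f \<omega>^2 + g \<omega>^2)"
  proof (intro AE_I2)
    fix \<omega>
    have "0 \<le> f \<omega>^2 + g \<omega>^2" by simp
    then show "norm (f \<omega> * g \<omega>) \<le> norm (f \<omega>^2 + g \<omega>^2)"
      using abs_mult_le_sq[of "f \<omega>" "g \<omega>"] unfolding real_norm_def by arith
  qed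
qed

theorem lemmaA1:
  fixes M :: "'a measure" and d :: nat and lam :: "nat \<Rightarrow> real"
    and \<eta> \<beta> \<mu> :: real
    and x m u :: "nat \<Rightarrow> nat \<Rightarrow> 'a \<Rightarrow> real"
  assumes P: "prob_space M"
    and lam_nonneg: "\<And>i. i < d \<Longrightarrow> lam i \<ge> 0"
    and lam_nonzero: "\<exists>i<d. lam i \<noteq> 0"
    and eta: "\<eta> > 0" and beta: "0 \<le> \<beta>" "\<beta> < 1" and mu: "\<mu> > 0"
    and x0_meas: "\<And>i. i < d \<Longrightarrow> x 0 i \<in> borel_measurable M"
    and m0_meas: "\<And>i. i < d \<Longrightarrow> m 0 i \<in> borel_measurable M"
    and x0_sq: "\<And>i. i < d \<Longrightarrow> integrable M (\<lambda>\<omega>. (x 0 i \<omega>)^2)"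
    and m0_sq: "\<And>i. i < d \<Longrightarrow> integrable M (\<lambda>\<omega>. (m 0 i \<omega>)^2)"
    and u_normal: "\<And>t i. i < d \<Longrightarrow>
          distributed M lborel (u t i) (\<lambda>z. ennreal (std_normal_density z))"
    and u_coord_indep: "\<And>t. prob_space.indep_vars M (\<lambda>_. borel) (u t) {..<d}"
    and u_iid: "prob_space.indep_vars M (\<lambda>_. PiM {..<d} (\<lambda>_. borel))
                  (\<lambda>t \<omega>. \<lambda>i\<in>{..<d}. u t i \<omega>) UNIV"
    and u_indep_state: "\<And>t. prob_space.indep_var M
          (PiM {..<d} (\<lambda>_. borel)) (\<lambda>\<omega>. \<lambda>i\<in>{..<d}. u t i \<omega>)
          (PiM {..<2*d} (\<lambda>_. borel))
          (\<lambda>\<omega>. \<lambda>k\<in>{..<2*d}. if k < d then x t k \<omega> else m t (k - d) \<omega>)"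
    and m_step: "\<And>t i \<omega>. i < d \<Longrightarrow>
          m (Suc t) i \<omega> = \<beta> * m t i \<omega>
            + (fquad d lam (\<lambda>j. x t j \<omega> + \<mu> * u t j \<omega>)
               - fquad d lam (\<lambda>j. x t j \<omega> - \<mu> * u t j \<omega>)) / (2 * \<mu>) * u t i \<omega>"
    and x_step: "\<And>t i \<omega>. i < d \<Longrightarrow> x (Suc t) i \<omega> = x t i \<omega> - \<eta> * m (Suc t) i \<omega>"
  shows "\<forall>t. \<forall>i<d.
    Wmat M \<eta> x m i (Suc t) =
      Amat \<eta> \<beta> (lam i) ** Wmat M \<eta> x m i t ** transpose (Amat \<eta> \<beta> (lam i))
      + (\<eta>^2 * ((lam i)^2 * (Wmat M \<eta> x m i t $ 1 $ 1)
                 + (\<Sum>j<d. (lam j)^2 * (Wmat M \<eta> x m j t $ 1 $ 1)))) *\<^sub>R Qmat"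
proof -
  interpret prob_space M by (rule P)
  have u_meas[measurable]: "\<And>t i. i < d \<Longrightarrow> u t i \<in> borel_measurable M"
    using u_normal distributed_measurable by (metis measurable_lborel1)
  have mom: "integrable M (\<lambda>\<omega>. u t l \<omega> ^ n) \<and> integral\<^sup>L M (\<lambda>\<omega>. u t l \<omega> ^ n) = nm n"
    if "l < d" for t l n
  proof -
    have D: "distributed M lborel (u t l) (\<lambda>z. ennreal (std_normal_density z))"
      using u_normal that by blast
    have "integrable M (\<lambda>\<omega>. u t l \<omega> ^ n)"
      using distributed_integrable[OF D, of "\<lambda>x. x ^ n"] integrable_std_normal_moment[of n] by simp
    moreover have "integral\<^sup>L M (\<lambda>\<omega>. u t l \<omega> ^ n) = nm n"
      using distributed_integral[OF D, of "\<lambda>x. x ^ n"] by (simp add: nm_def)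
    ultimately show ?thesis by blast
  qed
  have Umon: "integrable M (\<lambda>\<omega>. \<Prod>l<d. u t l \<omega> ^ p l)
      \<and> integral\<^sup>L M (\<lambda>\<omega>. \<Prod>l<d. u t l \<omega> ^ p l) = (\<Prod>l<d. nm (p l))" for t p
  proof -
    have ind: "indep_vars (\<lambda>_. borel) (\<lambda>l \<omega>. u t l \<omega> ^ p l) {..<d}"
      by (rule indep_vars_compose2[OF u_coord_indep]) auto
    have int: "\<And>l. l \<in> {..<d} \<Longrightarrow> integrable M (\<lambda>\<omega>. u t l \<omega> ^ p l)" using mom by auto
    show ?thesis
      using indep_vars_lebesgue_integral[OF _ ind int] indep_vars_integrable[OF _ ind int] mom
      by simp
  qed
  have Indep: "integrable M (\<lambda>\<omega>. F (\<lambda>l\<in>{..<d}. u t l \<omega>) *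
          G (\<lambda>k\<in>{..<2*d}. if k < d then x t k \<omega> else m t (k - d) \<omega>))
     \<and> integral\<^sup>L M (\<lambda>\<omega>. F (\<lambda>l\<in>{..<d}. u t l \<omega>) *
          G (\<lambda>k\<in>{..<2*d}. if k < d then x t k \<omega> else m t (k - d) \<omega>))
       = integral\<^sup>L M (\<lambda>\<omega>. F (\<lambda>l\<in>{..<d}. u t l \<omega>)) *
         integral\<^sup>L M (\<lambda>\<omega>. G (\<lambda>k\<in>{..<2*d}. if k < d then x t k \<omega> else m t (k - d) \<omega>))"
    if F: "F \<in> borel_measurable (PiM {..<d} (\<lambda>_. borel))"
      and G: "G \<in> borel_measurable (PiM {..<2*d} (\<lambda>_. borel))"
      and iF: "integrable M (\<lambda>\<omega>. F (\<lambda>l\<in>{..<d}. u t l \<omega>))"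
      and iG: "integrable M (\<lambda>\<omega>. G (\<lambda>k\<in>{..<2*d}. if k < d then x t k \<omega> else m t (k - d) \<omega>))"
    for t and F G :: "(nat \<Rightarrow> real) \<Rightarrow> real"
  proof -
    have I: "indep_var borel (\<lambda>\<omega>. F (\<lambda>l\<in>{..<d}. u t l \<omega>)) borel
        (\<lambda>\<omega>. G (\<lambda>k\<in>{..<2*d}. if k < d then x t k \<omega> else m t (k - d) \<omega>))"
      using indep_var_compose[OF u_indep_state[of t] F G] by (simp add: comp_def)
    show ?thesis
      using indep_var_lebesgue_integral[OF I iF iG] indep_var_integrable[OF I iF iG] by simp
  qed
  define st where "st t k \<omega> = (if k < d then x t k \<omega> else m t (k - d) \<omega>)" for t k \<omega>
  define IH where "IH t \<longleftrightarrow> (\<forall>j<d. x t j \<in> borel_measurable M \<and> m t j \<in> borel_measurable M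
      \<and> integrable M (\<lambda>\<omega>. (x t j \<omega>)^2) \<and> integrable M (\<lambda>\<omega>. (m t j \<omega>)^2))" for t
  have GEN: "integrable M (\<lambda>\<omega>. (\<Prod>l<d. u t l \<omega> ^ p l) * (st t a \<omega> * st t b \<omega>))
     \<and> integral\<^sup>L M (\<lambda>\<omega>. (\<Prod>l<d. u t l \<omega> ^ p l) * (st t a \<omega> * st t b \<omega>))
       = (\<Prod>l<d. nm (p l)) * integral\<^sup>L M (\<lambda>\<omega>. st t a \<omega> * st t b \<omega>)"
    if ab: "a < 2*d" "b < 2*d" and H: "IH t" for t p a b
  proof -
    have stm: "st t k \<in> borel_measurable M" "integrable M (\<lambda>\<omega>. (st t k \<omega>)^2)" if "k < 2*d" for k
      using H that unfolding IH_def st_def by (cases "k < d"; simp)+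
    have F: "(\<lambda>v. \<Prod>l<d. v l ^ p l) \<in> borel_measurable (PiM {..<d} (\<lambda>_. borel :: real measure))"
      by (intro borel_measurable_prod borel_measurable_power measurable_component_singleton) auto
    have G: "(\<lambda>v. v a * v b) \<in> borel_measurable (PiM {..<2*d} (\<lambda>_. borel :: real measure))"
      using ab by (intro borel_measurable_times measurable_component_singleton) auto
    have eF: "(\<lambda>\<omega>. (\<lambda>v. \<Prod>l<d. v l ^ p l) (\<lambda>l\<in>{..<d}. u t l \<omega>)) = (\<lambda>\<omega>. \<Prod>l<d. u t l \<omega> ^ p l)"
      by (auto intro!: prod.cong)
    have eG: "(\<lambda>\<omega>. (\<lambda>v. v a * v b) (\<lambda>k\<in>{..<2*d}. if k < d then x t k \<omega> else m t (k - d) \<omega>))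
        = (\<lambda>\<omega>. st t a \<omega> * st t b \<omega>)"
      using ab by (simp add: st_def)
    have iG: "integrable M (\<lambda>\<omega>. st t a \<omega> * st t b \<omega>)"
      using stm ab by (intro sq_int) auto
    show ?thesis
      using Indep[OF F G, of t] Umon[of t p] iG ab unfolding eF by (simp add: st_def)
  qed
  have step: "IH (Suc t) \<and> (\<forall>i<d. Wmat M \<eta> x m i (Suc t) =
      Amat \<eta> \<beta> (lam i) ** Wmat M \<eta> x m i t ** transpose (Amat \<eta> \<beta> (lam i))
      + (\<eta>^2 * ((lam i)^2 * (Wmat M \<eta> x m i t $ 1 $ 1)
                 + (\<Sum>j<d. (lam j)^2 * (Wmat M \<eta> x m j t $ 1 $ 1)))) *\<^sub>R Qmat)"
    if H: "IH t" for t
  proof -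
    have xm[measurable]: "x t j \<in> borel_measurable M" if "j < d" for j using H that unfolding IH_def by blast
    have mm[measurable]: "m t j \<in> borel_measurable M" if "j < d" for j using H that unfolding IH_def by blast
    have xsq: "integrable M (\<lambda>\<omega>. (x t j \<omega>)^2)" if "j < d" for j using H that unfolding IH_def by blast
    have msq: "integrable M (\<lambda>\<omega>. (m t j \<omega>)^2)" if "j < d" for j using H that unfolding IH_def by blast
    have K1: "integrable M (\<lambda>\<omega>. x t i \<omega> * x t j \<omega> * u t j \<omega> * u t i \<omega>)
       \<and> integral\<^sup>L M (\<lambda>\<omega>. x t i \<omega> * x t j \<omega> * u t j \<omega> * u t i \<omega>)
         = (if j = i then integral\<^sup>L M (\<lambda>\<omega>. (x t i \<omega>)^2) else 0)"
      if ij: "i < d" "j < d" for i j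
    proof -
      have e: "(\<lambda>\<omega>. x t i \<omega> * x t j \<omega> * u t j \<omega> * u t i \<omega>)
        = (\<lambda>\<omega>. (\<Prod>l<d. u t l \<omega> ^ (of_bool (l=j) + of_bool (l=i))) * (st t i \<omega> * st t j \<omega>))"
        by (rule ext) (simp add: mon1[OF ij(2,1)] st_def ij mult_ac)
      have g: "integral\<^sup>L M (\<lambda>\<omega>. st t i \<omega> * st t j \<omega>) = integral\<^sup>L M (\<lambda>\<omega>. x t i \<omega> * x t j \<omega>)"
        by (simp add: st_def ij)
      have G: "integrable M (\<lambda>\<omega>. (\<Prod>l<d. u t l \<omega> ^ (of_bool (l=j) + of_bool (l=i))) * (st t i \<omega> * st t j \<omega>))
       \<and> integral\<^sup>L M (\<lambda>\<omega>. (\<Prod>l<d. u t l \<omega> ^ (of_bool (l=j) + of_bool (l=i))) * (st t i \<omega> * st t j \<omega>))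
       = (\<Prod>l<d. nm (of_bool (l=j) + of_bool (l=i))) * integral\<^sup>L M (\<lambda>\<omega>. st t i \<omega> * st t j \<omega>)"
        using GEN[of i j t "\<lambda>l. of_bool (l=j) + of_bool (l=i)"] ij H by simp
      show ?thesis unfolding e using G unfolding nm1[OF ij(2,1)] g by (simp add: power2_eq_square)
    qed
    have K2: "integrable M (\<lambda>\<omega>. m t i \<omega> * x t j \<omega> * u t j \<omega> * u t i \<omega>)
       \<and> integral\<^sup>L M (\<lambda>\<omega>. m t i \<omega> * x t j \<omega> * u t j \<omega> * u t i \<omega>)
         = (if j = i then integral\<^sup>L M (\<lambda>\<omega>. x t i \<omega> * m t i \<omega>) else 0)"
      if ij: "i < d" "j < d" for i j
    proof -
      have e: "(\<lambda>\<omega>. m t i \<omega> * x t j \<omega> * u t j \<omega> * u t i \<omega>)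
        = (\<lambda>\<omega>. (\<Prod>l<d. u t l \<omega> ^ (of_bool (l=j) + of_bool (l=i))) * (st t j \<omega> * st t (d + i) \<omega>))"
        by (rule ext) (simp add: mon1[OF ij(2,1)] st_def ij mult_ac)
      have g: "integral\<^sup>L M (\<lambda>\<omega>. st t j \<omega> * st t (d + i) \<omega>) = integral\<^sup>L M (\<lambda>\<omega>. x t j \<omega> * m t i \<omega>)"
        by (simp add: st_def ij)
      have G: "integrable M (\<lambda>\<omega>. (\<Prod>l<d. u t l \<omega> ^ (of_bool (l=j) + of_bool (l=i))) * (st t j \<omega> * st t (d + i) \<omega>))
       \<and> integral\<^sup>L M (\<lambda>\<omega>. (\<Prod>l<d. u t l \<omega> ^ (of_bool (l=j) + of_bool (l=i))) * (st t j \<omega> * st t (d + i) \<omega>))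
       = (\<Prod>l<d. nm (of_bool (l=j) + of_bool (l=i))) * integral\<^sup>L M (\<lambda>\<omega>. st t j \<omega> * st t (d + i) \<omega>)"
        using GEN[of j "d + i" t "\<lambda>l. of_bool (l=j) + of_bool (l=i)"] ij H by simp
      show ?thesis unfolding e using G unfolding nm1[OF ij(2,1)] g by simp
    qed
    have K3: "integrable M (\<lambda>\<omega>. x t j \<omega> * x t k \<omega> * (u t j \<omega> * u t k \<omega> * (u t i \<omega>)^2))
       \<and> integral\<^sup>L M (\<lambda>\<omega>. x t j \<omega> * x t k \<omega> * (u t j \<omega> * u t k \<omega> * (u t i \<omega>)^2))
         = (if j = k then (if j = i then 3 else 1) * integral\<^sup>L M (\<lambda>\<omega>. (x t j \<omega>)^2) else 0)"
      if ijk: "i < d" "j < d" "k < d" for i j k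
    proof -
      have e: "(\<lambda>\<omega>. x t j \<omega> * x t k \<omega> * (u t j \<omega> * u t k \<omega> * (u t i \<omega>)^2))
        = (\<lambda>\<omega>. (\<Prod>l<d. u t l \<omega> ^ (of_bool (l=j) + of_bool (l=k) + 2 * of_bool (l=i))) * (st t j \<omega> * st t k \<omega>))"
        by (rule ext) (simp add: mon2[OF ijk(2,3,1)] st_def ijk mult_ac)
      have g: "integral\<^sup>L M (\<lambda>\<omega>. st t j \<omega> * st t k \<omega>) = integral\<^sup>L M (\<lambda>\<omega>. x t j \<omega> * x t k \<omega>)"
        by (simp add: st_def ijk)
      have G: "integrable M (\<lambda>\<omega>. (\<Prod>l<d. u t l \<omega> ^ (of_bool (l=j) + of_bool (l=k) + 2 * of_bool (l=i))) * (st t j \<omega> * st t k \<omega>))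
       \<and> integral\<^sup>L M (\<lambda>\<omega>. (\<Prod>l<d. u t l \<omega> ^ (of_bool (l=j) + of_bool (l=k) + 2 * of_bool (l=i))) * (st t j \<omega> * st t k \<omega>))
       = (\<Prod>l<d. nm (of_bool (l=j) + of_bool (l=k) + 2 * of_bool (l=i))) * integral\<^sup>L M (\<lambda>\<omega>. st t j \<omega> * st t k \<omega>)"
        using GEN[of j k t "\<lambda>l. of_bool (l=j) + of_bool (l=k) + 2 * of_bool (l=i)"] ijk H by simp
      show ?thesis unfolding e using G unfolding nm2[OF ijk(2,3,1)] g by (simp add: power2_eq_square)
    qed
    have per_i: "x (Suc t) i \<in> borel_measurable M \<and> m (Suc t) i \<in> borel_measurable M
      \<and> integrable M (\<lambda>\<omega>. (x (Suc t) i \<omega>)^2) \<and> integrable M (\<lambda>\<omega>. (m (Suc t) i \<omega>)^2)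
      \<and> Wmat M \<eta> x m i (Suc t) =
      Amat \<eta> \<beta> (lam i) ** Wmat M \<eta> x m i t ** transpose (Amat \<eta> \<beta> (lam i))
      + (\<eta>^2 * ((lam i)^2 * (Wmat M \<eta> x m i t $ 1 $ 1)
                 + (\<Sum>j<d. (lam j)^2 * (Wmat M \<eta> x m j t $ 1 $ 1)))) *\<^sub>R Qmat"
      if i: "i < d" for i
    proof -
      have mS: "m (Suc t) i \<omega> = \<beta> * m t i \<omega> + (\<Sum>j<d. lam j * x t j \<omega> * u t j \<omega>) * u t i \<omega>" for \<omega>
        using m_step[OF i, of t \<omega>] fquad_diff[of d lam "\<lambda>j. x t j \<omega>" \<mu> "\<lambda>j. u t j \<omega>"] mu by simp
      have mS': "m (Suc t) i = (\<lambda>\<omega>. \<beta> * m t i \<omega> + (\<Sum>j<d. lam j * x t j \<omega> * u t j \<omega>) * u t i \<omega>)"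
        using mS by (rule ext)
      have mSm[measurable]: "m (Suc t) i \<in> borel_measurable M"
        unfolding mS' using i
        by (intro borel_measurable_add borel_measurable_times borel_measurable_sum measurable_const) auto
      have xS': "x (Suc t) i = (\<lambda>\<omega>. x t i \<omega> - \<eta> * m (Suc t) i \<omega>)"
        using x_step[OF i] by (rule ext)
      have xSm[measurable]: "x (Suc t) i \<in> borel_measurable M"
        unfolding xS' using i
        by (intro borel_measurable_diff borel_measurable_times measurable_const) auto
      have XM: "x t i \<omega> * m (Suc t) i \<omega> = \<beta> * (x t i \<omega> * m t i \<omega>)
          + (\<Sum>j<d. lam j * (x t i \<omega> * x t j \<omega> * u t j \<omega> * u t i \<omega>))" for \<omega>
      proof -
        have g: "x t i \<omega> * ((\<Sum>j<d. lam j * x t j \<omega> * u t j \<omega>) * u t i \<omega>)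
          = (\<Sum>j<d. lam j * (x t i \<omega> * x t j \<omega> * u t j \<omega> * u t i \<omega>))"
          by (simp only: sum_distrib_left sum_distrib_right, intro sum.cong refl, simp add: mult_ac)
        have h: "x t i \<omega> * (\<beta> * m t i \<omega>) = \<beta> * (x t i \<omega> * m t i \<omega>)" by (simp add: mult_ac)
        show ?thesis unfolding mS distrib_left g h ..
      qed
      have sqexp: "(\<beta>*A + G*U)^2 = \<beta>^2*A^2 + 2*\<beta>*(A*G*U) + G^2*U^2" for A G U :: real
        by (simp add: power2_eq_square algebra_simps)
      have MM: "(m (Suc t) i \<omega>)^2 = \<beta>^2 * (m t i \<omega>)^2
          + 2 * \<beta> * (\<Sum>j<d. lam j * (m t i \<omega> * x t j \<omega> * u t j \<omega> * u t i \<omega>))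
          + (\<Sum>j<d. \<Sum>k<d. lam j * lam k * (x t j \<omega> * x t k \<omega> * (u t j \<omega> * u t k \<omega> * (u t i \<omega>)^2)))" for \<omega>
      proof -
        have a: "m t i \<omega> * (\<Sum>j<d. lam j * x t j \<omega> * u t j \<omega>) * u t i \<omega>
          = (\<Sum>j<d. lam j * (m t i \<omega> * x t j \<omega> * u t j \<omega> * u t i \<omega>))"
          by (simp only: sum_distrib_left sum_distrib_right, intro sum.cong refl, simp add: mult_ac)
        have b: "(\<Sum>j<d. lam j * x t j \<omega> * u t j \<omega>)^2 * (u t i \<omega>)^2
          = (\<Sum>j<d. \<Sum>k<d. lam j * lam k * (x t j \<omega> * x t k \<omega> * (u t j \<omega> * u t k \<omega> * (u t i \<omega>)^2)))"
          unfolding sq_sum by (intro sum.cong refl) (simp add: mult_ac)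
        show ?thesis unfolding mS sqexp a b ..
      qed
      define a0 where "a0 = integral\<^sup>L M (\<lambda>\<omega>. (x t i \<omega>)^2)"
      define B0 where "B0 = integral\<^sup>L M (\<lambda>\<omega>. x t i \<omega> * m t i \<omega>)"
      define C0 where "C0 = integral\<^sup>L M (\<lambda>\<omega>. (m t i \<omega>)^2)"
      define S where "S = (\<Sum>j<d. (lam j)^2 * integral\<^sup>L M (\<lambda>\<omega>. (x t j \<omega>)^2))"
      have iS1: "integrable M (\<lambda>\<omega>. \<Sum>j<d. lam j * (x t i \<omega> * x t j \<omega> * u t j \<omega> * u t i \<omega>))"
        by (rule Bochner_Integration.integrable_sum, rule integrable_mult_right) (use K1 i in auto)
      have iXMm: "integrable M (\<lambda>\<omega>. x t i \<omega> * m t i \<omega>)"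
        using sq_int[OF xm mm xsq msq, OF i i i i] .
      have iXM: "integrable M (\<lambda>\<omega>. x t i \<omega> * m (Suc t) i \<omega>)"
        unfolding XM by (rule Bochner_Integration.integrable_add[OF integrable_mult_right iS1]) (rule iXMm)
      have EXM: "integral\<^sup>L M (\<lambda>\<omega>. x t i \<omega> * m (Suc t) i \<omega>) = \<beta> * B0 + lam i * a0"
      proof -
        have "integral\<^sup>L M (\<lambda>\<omega>. x t i \<omega> * m (Suc t) i \<omega>)
          = \<beta> * B0 + (\<Sum>j<d. lam j * (if j = i then a0 else 0))"
          unfolding XM B0_def a0_def using K1 i sq_int[OF xm mm xsq msq, OF i i i i]
          by (subst Bochner_Integration.integral_add) (auto intro!: Bochner_Integration.integrable_sum simp: Bochner_Integration.integral_sum)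
        also have "(\<Sum>j<d. lam j * (if j = i then a0 else 0)) = lam i * a0"
          using i by (simp add: if_distrib cong: if_cong)
        finally show ?thesis .
      qed
      have iS2: "integrable M (\<lambda>\<omega>. \<Sum>j<d. lam j * (m t i \<omega> * x t j \<omega> * u t j \<omega> * u t i \<omega>))"
        by (rule Bochner_Integration.integrable_sum, rule integrable_mult_right) (use K2 i in auto)
      have iS3: "integrable M (\<lambda>\<omega>. \<Sum>j<d. \<Sum>k<d. lam j * lam k * (x t j \<omega> * x t k \<omega> * (u t j \<omega> * u t k \<omega> * (u t i \<omega>)^2)))"
        by (rule Bochner_Integration.integrable_sum, rule Bochner_Integration.integrable_sum, rule integrable_mult_right) (use K3 i in auto)
      have iMM: "integrable M (\<lambda>\<omega>. (m (Suc t) i \<omega>)^2)"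
        unfolding MM
        by (rule Bochner_Integration.integrable_add[OF Bochner_Integration.integrable_add[OF integrable_mult_right integrable_mult_right[OF iS2]] iS3])
           (rule msq[OF i])
      have I3: "integral\<^sup>L M (\<lambda>\<omega>. \<Sum>j<d. \<Sum>k<d. lam j * lam k * (x t j \<omega> * x t k \<omega> * (u t j \<omega> * u t k \<omega> * (u t i \<omega>)^2)))
        = (\<Sum>j<d. \<Sum>k<d. lam j * lam k * (if j = k then (if j = i then 3 else 1) * integral\<^sup>L M (\<lambda>\<omega>. (x t j \<omega>)^2) else 0))"
      proof -
        have "integral\<^sup>L M (\<lambda>\<omega>. \<Sum>j<d. \<Sum>k<d. lam j * lam k * (x t j \<omega> * x t k \<omega> * (u t j \<omega> * u t k \<omega> * (u t i \<omega>)^2)))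
          = (\<Sum>j<d. integral\<^sup>L M (\<lambda>\<omega>. \<Sum>k<d. lam j * lam k * (x t j \<omega> * x t k \<omega> * (u t j \<omega> * u t k \<omega> * (u t i \<omega>)^2))))"
          by (rule Bochner_Integration.integral_sum) (rule Bochner_Integration.integrable_sum, rule integrable_mult_right, use K3 i in auto)
        also have "\<dots> = (\<Sum>j<d. \<Sum>k<d. integral\<^sup>L M (\<lambda>\<omega>. lam j * lam k * (x t j \<omega> * x t k \<omega> * (u t j \<omega> * u t k \<omega> * (u t i \<omega>)^2))))"
          by (rule sum.cong[OF refl], rule Bochner_Integration.integral_sum) (rule integrable_mult_right, use K3 i in auto)
        also have "\<dots> = (\<Sum>j<d. \<Sum>k<d. lam j * lam k * (if j = k then (if j = i then 3 else 1) * integral\<^sup>L M (\<lambda>\<omega>. (x t j \<omega>)^2) else 0))"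
          using K3 i by (auto intro!: sum.cong)
        finally show ?thesis .
      qed
      have EMM: "integral\<^sup>L M (\<lambda>\<omega>. (m (Suc t) i \<omega>)^2)
          = \<beta>^2 * C0 + 2 * \<beta> * (lam i * B0) + (S + 2 * (lam i)^2 * a0)"
      proof -
        have "integral\<^sup>L M (\<lambda>\<omega>. (m (Suc t) i \<omega>)^2)
          = \<beta>^2 * C0 + 2 * \<beta> * (\<Sum>j<d. lam j * (if j = i then B0 else 0))
            + (\<Sum>j<d. \<Sum>k<d. lam j * lam k * (if j = k then (if j = i then 3 else 1) * integral\<^sup>L M (\<lambda>\<omega>. (x t j \<omega>)^2) else 0))"
          unfolding MM B0_def C0_def using K2 K3 i msq
          by (subst Bochner_Integration.integral_add, (auto intro!: Bochner_Integration.integrable_sum Bochner_Integration.integrable_add)[2])+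
             (auto intro!: Bochner_Integration.integrable_sum simp: Bochner_Integration.integral_sum I3)
        also have "(\<Sum>j<d. lam j * (if j = i then B0 else 0)) = lam i * B0"
          using i by (simp add: if_distrib cong: if_cong)
        also have "(\<Sum>j<d. \<Sum>k<d. lam j * lam k * (if j = k then (if j = i then 3 else 1) * integral\<^sup>L M (\<lambda>\<omega>. (x t j \<omega>)^2) else 0))
           = (\<Sum>j<d. (lam j)^2 * integral\<^sup>L M (\<lambda>\<omega>. (x t j \<omega>)^2) + (if j = i then 2 * (lam i)^2 * a0 else 0))"
          by (rule sum.cong) (auto simp: if_distrib a0_def power2_eq_square cong: if_cong)
        also have "\<dots> = S + 2 * (lam i)^2 * a0"
          using i by (simp add: sum.distrib S_def)
        finally show ?thesis .
      qed
      have XX: "(x (Suc t) i \<omega>)^2 = (x t i \<omega>)^2 - 2 * \<eta> * (x t i \<omega> * m (Suc t) i \<omega>)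
          + \<eta>^2 * (m (Suc t) i \<omega>)^2" for \<omega>
        unfolding x_step[OF i] by (simp add: power2_eq_square algebra_simps)
      have XMn: "\<eta> * x (Suc t) i \<omega> * m (Suc t) i \<omega> = \<eta> * (x t i \<omega> * m (Suc t) i \<omega>)
          - \<eta>^2 * (m (Suc t) i \<omega>)^2" for \<omega>
        unfolding x_step[OF i] by (simp add: power2_eq_square algebra_simps)
      have iXX: "integrable M (\<lambda>\<omega>. (x (Suc t) i \<omega>)^2)"
        unfolding XX using iXM iMM xsq i by auto
      have E1: "integral\<^sup>L M (\<lambda>\<omega>. (x (Suc t) i \<omega>)^2) = a0 - 2 * \<eta> * (\<beta> * B0 + lam i * a0)
          + \<eta>^2 * (\<beta>^2 * C0 + 2 * \<beta> * (lam i * B0) + (S + 2 * (lam i)^2 * a0))"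
        unfolding XX using iXM iMM xsq[OF i] EXM EMM by (simp add: a0_def)
      have E2: "integral\<^sup>L M (\<lambda>\<omega>. \<eta> * x (Suc t) i \<omega> * m (Suc t) i \<omega>) = \<eta> * (\<beta> * B0 + lam i * a0)
          - \<eta>^2 * (\<beta>^2 * C0 + 2 * \<beta> * (lam i * B0) + (S + 2 * (lam i)^2 * a0))"
        unfolding XMn using iXM iMM EXM EMM by simp
      have E3: "integral\<^sup>L M (\<lambda>\<omega>. \<eta>^2 * (m (Suc t) i \<omega>)^2) =
          \<eta>^2 * (\<beta>^2 * C0 + 2 * \<beta> * (lam i * B0) + (S + 2 * (lam i)^2 * a0))"
        using EMM by simp
      have W0: "Wmat M \<eta> x m i t = mat2 a0 (\<eta> * B0) (\<eta> * B0) (\<eta>^2 * C0)"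
        unfolding Wmat_def a0_def B0_def C0_def by (simp add: mult.assoc)
      have W11: "Wmat M \<eta> x m j t $ 1 $ 1 = integral\<^sup>L M (\<lambda>\<omega>. (x t j \<omega>)^2)" for j
        unfolding Wmat_def mat2_def by simp
      have W1: "Wmat M \<eta> x m i (Suc t) =
        mat2 ((1 - \<eta>*lam i)^2 * a0 - 2*(1-\<eta>*lam i)*\<beta>*(\<eta> * B0) + \<beta>^2*(\<eta>^2 * C0) + \<eta>^2 * ((lam i)^2 * a0 + S))
              (\<eta>*lam i*(1-\<eta>*lam i)*a0 + (1 - 2*\<eta>*lam i)*\<beta>*(\<eta> * B0) - \<beta>^2*(\<eta>^2 * C0) - \<eta>^2 * ((lam i)^2 * a0 + S))
              (\<eta>*lam i*(1-\<eta>*lam i)*a0 + (1 - 2*\<eta>*lam i)*\<beta>*(\<eta> * B0) - \<beta>^2*(\<eta>^2 * C0) - \<eta>^2 * ((lam i)^2 * a0 + S))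
              ((\<eta>*lam i)^2*a0 + 2*\<eta>*lam i*\<beta>*(\<eta> * B0) + \<beta>^2*(\<eta>^2 * C0) + \<eta>^2 * ((lam i)^2 * a0 + S))"
      proof -
        have r1: "a0 - 2 * \<eta> * (\<beta> * B0 + lam i * a0)
          + \<eta>^2 * (\<beta>^2 * C0 + 2 * \<beta> * (lam i * B0) + (S + 2 * (lam i)^2 * a0))
          = (1 - \<eta>*lam i)^2 * a0 - 2*(1-\<eta>*lam i)*\<beta>*(\<eta> * B0) + \<beta>^2*(\<eta>^2 * C0) + \<eta>^2 * ((lam i)^2 * a0 + S)"
          by (simp add: power2_eq_square algebra_simps)
        have r2: "\<eta> * (\<beta> * B0 + lam i * a0)
          - \<eta>^2 * (\<beta>^2 * C0 + 2 * \<beta> * (lam i * B0) + (S + 2 * (lam i)^2 * a0))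
          = \<eta>*lam i*(1-\<eta>*lam i)*a0 + (1 - 2*\<eta>*lam i)*\<beta>*(\<eta> * B0) - \<beta>^2*(\<eta>^2 * C0) - \<eta>^2 * ((lam i)^2 * a0 + S)"
          by (simp add: power2_eq_square algebra_simps)
        have r3: "\<eta>^2 * (\<beta>^2 * C0 + 2 * \<beta> * (lam i * B0) + (S + 2 * (lam i)^2 * a0))
          = (\<eta>*lam i)^2*a0 + 2*\<eta>*lam i*\<beta>*(\<eta> * B0) + \<beta>^2*(\<eta>^2 * C0) + \<eta>^2 * ((lam i)^2 * a0 + S)"
          by (simp add: power2_eq_square algebra_simps)
        show ?thesis unfolding Wmat_def E1 E2 E3 unfolding r1 r2 unfolding r3 ..
      qed
      have sc: "(\<eta>^2 * ((lam i)^2 * (Wmat M \<eta> x m i t $ 1 $ 1)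
                 + (\<Sum>j<d. (lam j)^2 * (Wmat M \<eta> x m j t $ 1 $ 1)))) = \<eta>^2 * ((lam i)^2 * a0 + S)"
        by (simp add: W11 a0_def S_def)
      have W: "Wmat M \<eta> x m i (Suc t) =
      Amat \<eta> \<beta> (lam i) ** Wmat M \<eta> x m i t ** transpose (Amat \<eta> \<beta> (lam i))
      + (\<eta>^2 * ((lam i)^2 * (Wmat M \<eta> x m i t $ 1 $ 1)
                 + (\<Sum>j<d. (lam j)^2 * (Wmat M \<eta> x m j t $ 1 $ 1)))) *\<^sub>R Qmat"
        unfolding sc unfolding W0 W1 mat_lemma ..
      show ?thesis by (intro conjI xSm mSm iXX iMM W)
    qed
    show ?thesis
    proof (intro conjI)
      show "IH (Suc t)" unfolding IH_def
      proof (intro allI impI)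
        fix j assume j: "j < d"
        show "x (Suc t) j \<in> borel_measurable M \<and> m (Suc t) j \<in> borel_measurable M
          \<and> integrable M (\<lambda>\<omega>. (x (Suc t) j \<omega>)^2) \<and> integrable M (\<lambda>\<omega>. (m (Suc t) j \<omega>)^2)"
          using per_i[OF j] by (elim conjE) (intro conjI)
      qed
      show "\<forall>i<d. Wmat M \<eta> x m i (Suc t) =
      Amat \<eta> \<beta> (lam i) ** Wmat M \<eta> x m i t ** transpose (Amat \<eta> \<beta> (lam i))
      + (\<eta>^2 * ((lam i)^2 * (Wmat M \<eta> x m i t $ 1 $ 1)
                 + (\<Sum>j<d. (lam j)^2 * (Wmat M \<eta> x m j t $ 1 $ 1)))) *\<^sub>R Qmat"
      proof (intro allI impI)
        fix j assume j: "j < d"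
        show "Wmat M \<eta> x m j (Suc t) =
      Amat \<eta> \<beta> (lam j) ** Wmat M \<eta> x m j t ** transpose (Amat \<eta> \<beta> (lam j))
      + (\<eta>^2 * ((lam j)^2 * (Wmat M \<eta> x m j t $ 1 $ 1)
                 + (\<Sum>k<d. (lam k)^2 * (Wmat M \<eta> x m k t $ 1 $ 1)))) *\<^sub>R Qmat"
          using per_i[OF j] by (elim conjE)
      qed
    qed
  qed
  have allIH: "IH t" for t
  proof (induction t)
    case 0
    show ?case unfolding IH_def using x0_meas m0_meas x0_sq m0_sq by blast
  next
    case (Suc t)
    show ?case using step[OF Suc.IH] by (rule conjunct1)
  qed
  show ?thesis
  proof (rule allI)
    fix t
    show "\<forall>i<d. Wmat M \<eta> x m i (Suc t) =
      Amat \<eta> \<beta> (lam i) ** Wmat M \<eta> x m i t ** transpose (Amat \<eta> \<beta> (lam i))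
      + (\<eta>^2 * ((lam i)^2 * (Wmat M \<eta> x m i t $ 1 $ 1)
                 + (\<Sum>j<d. (lam j)^2 * (Wmat M \<eta> x m j t $ 1 $ 1)))) *\<^sub>R Qmat"
      using step[OF allIH[of t]] by (rule conjunct2)
  qed
qed

end
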